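(* For every positive integer $m$, the exponential generating function $\sum_{n\ge0}a_m(n)x^n/n!$, where $a_m(n)$ is the number of permutations of $[n]$ in which every alternating run has length less than $m$, equals \[ \left[\sum_{n=0}^{\infty}\left(E_{mn}\frac{x^{mn}}{(mn)!}-E_{mn+1}\frac{x^{mn+1}}{(mn+1)!}\right)\right]^{-1}. \]
   Context: For $\pi\in\mathfrak S_n$, $i\in[n-1]$ is an alternating descent if $i$ odd and $\pi_i>\pi_{i+1}$, or $i$ even and $\pi_i<\pi_{i+1}$. An alternating run is a maximal block of consecutive entries containing no alternating descent (i.e. no $i$ with both $i,i+1$ in the block is an alternating descent). $a_m(0)=1$. $E_n$: $\sum E_nx^n/n!=\sec x+\tan x$. *)

theory Defs
  imports Complex_Main "HOL-Computational_Algebra.Formal_Power_Series"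
begin

definition euler_num :: "nat \<Rightarrow> real" where
  "euler_num n = fact n * fps_nth (inverse (fps_cos (1::real)) + fps_tan 1) n"

(* A permutation pi of [n] is a list xs with distinct entries and set xs = {1..n};
   pi_i = xs ! (i - 1) (1-indexed). *)
definition alt_desc :: "nat list \<Rightarrow> nat \<Rightarrow> bool" where
  "alt_desc xs i \<longleftrightarrow> 1 \<le> i \<and> i < length xs \<and>
     ((odd i \<and> xs ! (i - 1) > xs ! i) \<or> (even i \<and> xs ! (i - 1) < xs ! i))"

definition desc_free_block :: "nat list \<Rightarrow> nat \<Rightarrow> nat \<Rightarrow> bool" where
  "desc_free_block xs a b \<longleftrightarrow> 1 \<le> a \<and> a \<le> b \<and> b \<le> length xs \<and>
     (\<forall>j. a \<le> j \<and> j < b \<longrightarrow> \<not> alt_desc xs j)"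

definition alt_run :: "nat list \<Rightarrow> nat \<Rightarrow> nat \<Rightarrow> bool" where
  "alt_run xs a b \<longleftrightarrow> desc_free_block xs a b \<and>
     (\<forall>a' b'. desc_free_block xs a' b' \<and> a' \<le> a \<and> b \<le> b' \<longrightarrow> a' = a \<and> b' = b)"

definition a_count :: "nat \<Rightarrow> nat \<Rightarrow> nat" where
  "a_count m n = card {xs. distinct xs \<and> set xs = {1..n} \<and>
     (\<forall>a b. alt_run xs a b \<longrightarrow> b - a + 1 < m)}"

end

theory Submission
  imports Defs
begin

unbundle fps_syntax



definition YY :: "real fps" where "YY = inverse (fps_cos 1) + fps_tan 1"
abbreviation CC where "CC \<equiv> fps_cos (1::real)"
abbreviation SS where "SS \<equiv> fps_sin (1::real)"

lemma euler_YY: "euler_num n = fact n * YY $ n"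
  by (simp add: euler_num_def YY_def)

lemma YY_CC: "YY * CC = 1 + SS"
proof -
  have c0: "CC $ 0 \<noteq> 0" by simp
  have "fps_tan 1 = SS * inverse CC" unfolding fps_tan_def using c0 by (rule fps_divide_unit)
  hence "YY * CC = inverse CC * CC + SS * (inverse CC * CC)" by (simp add: YY_def algebra_simps)
  also have "inverse CC * CC = 1" using c0 by (rule inverse_mult_eq_1)
  finally show ?thesis by simp
qed

lemma cancel_CC2:
  assumes "A * CC^2 = B * CC^2" shows "A = (B :: real fps)"
proof -
  have c0: "(CC^2) $ 0 \<noteq> 0" by (simp add: power2_eq_square)
  have "A * CC^2 * inverse (CC^2) = B * CC^2 * inverse (CC^2)" using assms by simp
  thus ?thesis using inverse_mult_eq_1'[OF c0] by (simp add: mult.assoc)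
qed

lemma YY_deriv: "2 * fps_deriv YY = 1 + YY^2"
proof -
  have d: "fps_deriv YY * CC - YY * SS = CC"
  proof -
    have "fps_deriv (YY * CC) = fps_deriv (1 + SS)" using YY_CC by simp
    moreover have "fps_deriv CC = - SS"
      using fps_cos_deriv[of 1] by (simp flip: fps_const_neg)
    ultimately have "YY * (- SS) + fps_deriv YY * CC = CC" by (simp add: fps_sin_deriv)
    thus ?thesis by (simp add: algebra_simps)
  qed
  have sq: "CC^2 + SS^2 = 1" by (rule fps_sin_cos_sum_of_squares)
  have "(2 * fps_deriv YY) * CC^2 = 2 * CC * (fps_deriv YY * CC)" by (simp add: power2_eq_square algebra_simps)
  also have "\<dots> = 2 * CC * (CC + YY * SS)" using d by (simp add: algebra_simps)
  also have "\<dots> = 2 * CC^2 + 2 * SS * (YY * CC)" by (simp add: power2_eq_square algebra_simps)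
  also have "\<dots> = 2 * CC^2 + 2 * SS * (1 + SS)" by (simp add: YY_CC)
  also have "\<dots> = CC^2 + (CC^2 + SS^2) + 2 * SS + SS^2" by (simp add: power2_eq_square algebra_simps)
  also have "\<dots> = CC^2 + (1 + SS)^2" using sq by (simp add: power2_eq_square algebra_simps)
  also have "\<dots> = (1 + YY^2) * CC^2" by (simp add: YY_CC[symmetric] power2_eq_square algebra_simps)
  finally show ?thesis by (rule cancel_CC2)
qed



definition RR :: "real fps \<Rightarrow> real fps" where "RR f = Abs_fps (\<lambda>n. (-1)^n * f $ n)"

lemma RR_mult: "RR (f * g) = RR f * RR g"
proof (rule fps_ext)
  fix n
  have "RR (f*g) $ n = (\<Sum>i=0..n. (-1)^n * (f$i * g$(n-i)))"
    by (simp add: RR_def fps_mult_nth sum_distrib_left)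
  also have "\<dots> = (\<Sum>i=0..n. ((-1)^i * f$i) * ((-1)^(n-i) * g$(n-i)))"
  proof (rule sum.cong)
    fix i assume "i \<in> {0..n}"
    hence "(-1::real)^n = (-1)^i * (-1)^(n-i)" by (simp add: power_add[symmetric])
    thus "(-1)^n * (f$i * g$(n-i)) = ((-1)^i * f$i) * ((-1)^(n-i) * g$(n-i))" by simp
  qed simp
  also have "\<dots> = (RR f * RR g) $ n" by (simp add: RR_def fps_mult_nth)
  finally show "RR (f*g) $ n = (RR f * RR g) $ n" .
qed

lemma RR_add: "RR (f + g) = RR f + RR g"
  by (rule fps_ext) (simp add: RR_def algebra_simps)

lemma RR_one: "RR 1 = 1"
  by (rule fps_ext) (simp add: RR_def)

lemma RR_CC: "RR CC = CC"
  by (rule fps_ext) (simp add: RR_def fps_cos_def)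

lemma RR_SS: "RR SS = - SS"
  by (rule fps_ext) (simp add: RR_def fps_sin_def)

lemma YY_RR: "YY * RR YY = 1"
proof -
  have a: "RR YY * CC = 1 - SS"
    using arg_cong[OF YY_CC, of RR] by (simp add: RR_mult RR_add RR_one RR_CC RR_SS)
  have sq: "CC^2 + SS^2 = 1" by (rule fps_sin_cos_sum_of_squares)
  have "(YY * RR YY) * CC^2 = (YY * CC) * (RR YY * CC)" by (simp add: power2_eq_square algebra_simps)
  also have "\<dots> = (1 + SS) * (1 - SS)" by (simp add: YY_CC a)
  also have "\<dots> = 1 * CC^2" using sq by (simp add: power2_eq_square algebra_simps)
  finally show ?thesis by (rule cancel_CC2)
qed

lemma E0: "euler_num 0 = 1"
  by (simp add: euler_YY YY_def fps_tan_def fps_divide_unit)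



lemma choose_fact_real: "i \<le> n \<Longrightarrow> fact i * fact (n-i) * real (n choose i) = (fact n :: real)"
  using arg_cong[OF binomial_fact_lemma, of i n "of_nat :: nat \<Rightarrow> real"] by (simp only: of_nat_mult of_nat_fact)

lemma E_conv_term: "i \<le> n \<Longrightarrow> fact n * (c * YY$i * YY$(n-i)) = c * (real (n choose i) * euler_num i * euler_num (n-i))"
proof -
  assume i: "i \<le> n"
  have "fact n * (c * YY$i * YY$(n-i)) = (fact i * fact (n-i) * real (n choose i)) * (c * YY$i * YY$(n-i))"
    by (simp only: choose_fact_real[OF i])
  also have "\<dots> = c * (real (n choose i) * (fact i * YY$i) * (fact (n-i) * YY$(n-i)))"
    by (simp only: mult_ac)
  finally show ?thesis by (simp only: euler_YY)
qed

lemma E_rec: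
  assumes "n \<ge> 1"
  shows "(\<Sum>i=0..n. real (n choose i) * euler_num i * euler_num (n-i)) = 2 * euler_num (Suc n)"
proof -
  have h: "fps_deriv YY + fps_deriv YY = 1 + YY^2" using YY_deriv by (simp only: mult_2)
  have "(fps_deriv YY + fps_deriv YY) $ n = (1 + YY^2) $ n" using h by (rule arg_cong)
  hence "fps_deriv YY $ n + fps_deriv YY $ n = 1 $ n + (YY * YY) $ n"
    by (simp only: fps_add_nth power2_eq_square)
  hence "2 * (real (n+1) * YY $ (n+1)) = (\<Sum>i=0..n. 1 * YY$i * YY$(n-i))"
    using assms by (simp add: fps_mult_nth mult.commute)
  hence "fact n * (2 * (real (n+1) * YY $ (n+1))) = (\<Sum>i=0..n. fact n * (1 * YY$i * YY$(n-i)))"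
    by (simp add: sum_distrib_left)
  also have "\<dots> = (\<Sum>i=0..n. 1 * (real (n choose i) * euler_num i * euler_num (n-i)))"
    by (rule sum.cong) (simp_all add: E_conv_term del: mult_1)
  finally have "(\<Sum>i=0..n. real (n choose i) * euler_num i * euler_num (n-i)) = 2 * (fact n * real (n+1) * YY $ (n+1))"
    by (simp add: mult_ac)
  also have "fact n * real (n+1) * YY $ (n+1) = euler_num (Suc n)"
    by (simp add: euler_YY mult_ac)
  finally show ?thesis .
qed

lemma E_alt:
  assumes "n \<ge> 1"
  shows "(\<Sum>i=0..n. (-1)^i * (real (n choose i) * euler_num i * euler_num (n-i))) = 0"
proof -
  have "(RR YY * YY) $ n = 0" using assms YY_RR by (simp add: mult.commute)
  hence "(\<Sum>i=0..n. (-1)^i * YY$i * YY$(n-i)) = 0"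
    by (simp add: fps_mult_nth RR_def mult.assoc)
  hence "(\<Sum>i=0..n. fact n * ((-1)^i * YY$i * YY$(n-i))) = 0"
    by (simp add: sum_distrib_left[symmetric])
  also have "(\<Sum>i=0..n. fact n * ((-1)^i * YY$i * YY$(n-i))) = (\<Sum>i=0..n. (-1)^i * (real (n choose i) * euler_num i * euler_num (n-i)))"
    by (rule sum.cong) (simp_all add: E_conv_term)
  finally show ?thesis .
qed

lemma E1: "euler_num 1 = 1"
proof -
  have h: "fps_deriv YY + fps_deriv YY = 1 + YY^2" using YY_deriv by (simp only: mult_2)
  have "(fps_deriv YY + fps_deriv YY) $ 0 = (1 + YY^2) $ 0" using h by (rule arg_cong)
  hence "2 * YY $ 1 = 1 + YY$0 * YY$0" by (simp add: power2_eq_square)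
  moreover have "YY $ 0 = 1" using E0 by (simp add: euler_YY)
  ultimately show ?thesis by (simp add: euler_YY)
qed


definition cutp :: "nat \<Rightarrow> nat list \<Rightarrow> nat \<Rightarrow> bool" where
  "cutp p xs i \<longleftrightarrow> 1 \<le> i \<and> i < length xs \<and>
     ((odd (i+p) \<and> xs ! (i - 1) > xs ! i) \<or> (even (i+p) \<and> xs ! (i - 1) < xs ! i))"

definition cutfree :: "nat \<Rightarrow> nat list \<Rightarrow> bool" where
  "cutfree p xs \<longleftrightarrow> (\<forall>i. \<not> cutp p xs i)"

definition gg :: "nat \<Rightarrow> nat \<Rightarrow> real" where
  "gg m k = (if m dvd (k - 1) then 1 else 0) - (if m dvd k then 1 else 0)"

primrec Wf :: "nat \<Rightarrow> nat \<Rightarrow> nat \<Rightarrow> nat list \<Rightarrow> real" where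
  "Wf 0 m p xs = 1"
| "Wf (Suc f) m p xs = (if xs = [] then 1 else
     (\<Sum>k\<in>{1..length xs}. if cutfree p (take k xs) then gg m k * Wf f m (p+k) (drop k xs) else 0))"

definition Wl :: "nat \<Rightarrow> nat \<Rightarrow> nat list \<Rightarrow> real" where
  "Wl m p xs = Wf (length xs) m p xs"

lemma Wf_indep: "length xs \<le> f \<Longrightarrow> length xs \<le> g \<Longrightarrow> Wf f m p xs = Wf g m p xs"
proof (induction f arbitrary: g xs p)
  case 0 thus ?case by (cases g) auto
next
  case (Suc f)
  show ?case
  proof (cases "xs = []")
    case True thus ?thesis by (cases g) auto
  next
    case False
    then obtain g' where g: "g = Suc g'" using Suc.prems by (cases g) auto
    have eq: "Wf f m (p+k) (drop k xs) = Wf g' m (p+k) (drop k xs)" if "k \<in> {1..length xs}" for k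
      using that Suc.prems g by (intro Suc.IH) auto
    have "Wf (Suc f) m p xs = (\<Sum>k\<in>{1..length xs}. if cutfree p (take k xs) then gg m k * Wf f m (p+k) (drop k xs) else 0)"
      using False by simp
    also have "\<dots> = (\<Sum>k\<in>{1..length xs}. if cutfree p (take k xs) then gg m k * Wf g' m (p+k) (drop k xs) else 0)"
      by (rule sum.cong[OF refl]) (simp add: eq)
    also have "\<dots> = Wf g m p xs" using False g by simp
    finally show ?thesis .
  qed
qed

lemma Wl_Nil [simp]: "Wl m p [] = 1"
  by (simp add: Wl_def)

lemma Wl_unfold: "xs \<noteq> [] \<Longrightarrow> Wl m p xs =
     (\<Sum>k\<in>{1..length xs}. if cutfree p (take k xs) then gg m k * Wl m (p+k) (drop k xs) else 0)"
proof -
  assume ne: "xs \<noteq> []"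
  then obtain f where f: "length xs = Suc f" by (cases xs) auto
  have eq: "Wf f m (p+k) (drop k xs) = Wl m (p+k) (drop k xs)" if "k \<in> {1..length xs}" for k
    unfolding Wl_def using that f by (intro Wf_indep) auto
  have "Wl m p xs = Wf (Suc f) m p xs" by (simp add: Wl_def f)
  also have "\<dots> = (\<Sum>k\<in>{1..length xs}. if cutfree p (take k xs) then gg m k * Wf f m (p+k) (drop k xs) else 0)"
    using ne by simp
  also have "\<dots> = (\<Sum>k\<in>{1..length xs}. if cutfree p (take k xs) then gg m k * Wl m (p+k) (drop k xs) else 0)"
    by (rule sum.cong[OF refl]) (simp add: eq)
  finally show ?thesis .
qed

lemma cutp_drop: "cutp (p+k) (drop k xs) j \<longleftrightarrow> 1 \<le> j \<and> cutp p xs (j+k)"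
  unfolding cutp_def
  by (cases "k \<le> length xs") (auto simp: nth_drop algebra_simps Suc_diff_le)

lemma cutp_take: "cutp p (take k xs) i \<longleftrightarrow> i < k \<and> cutp p xs i"
  unfolding cutp_def by auto

definition goodw :: "nat \<Rightarrow> nat \<Rightarrow> nat list \<Rightarrow> bool" where
  "goodw m p xs \<longleftrightarrow> (\<forall>t. 1 \<le> t \<and> t + m - 1 \<le> length xs \<longrightarrow>
      (\<exists>j. t \<le> j \<and> j < t + m - 1 \<and> cutp p xs j))"

definition GG :: "nat \<Rightarrow> nat \<Rightarrow> nat list \<Rightarrow> nat \<Rightarrow> bool" where
  "GG m p xs k \<longleftrightarrow> (\<forall>t. k + 1 \<le> t \<and> t + m - 1 \<le> length xs \<longrightarrow>
      (\<exists>j. t \<le> j \<and> j < t + m - 1 \<and> cutp p xs j))"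

lemma goodw_drop: "k \<le> length xs \<Longrightarrow> m > 0 \<Longrightarrow> goodw m (p+k) (drop k xs) \<longleftrightarrow> GG m p xs k"
proof
  assume k: "k \<le> length xs" and m: "m > 0"
  {
    assume g: "goodw m (p+k) (drop k xs)"
    show "GG m p xs k" unfolding GG_def
    proof (intro allI impI)
      fix t assume t: "k + 1 \<le> t \<and> t + m - 1 \<le> length xs"
      have "1 \<le> t - k \<and> t - k + m - 1 \<le> length (drop k xs)" using t k m by auto
      then obtain j where j: "t - k \<le> j \<and> j < t - k + m - 1 \<and> cutp (p+k) (drop k xs) j"
        using g unfolding goodw_def by blast
      hence "cutp p xs (j+k)" "1 \<le> j" by (auto simp: cutp_drop)
      thus "\<exists>j. t \<le> j \<and> j < t + m - 1 \<and> cutp p xs j" using j t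
        by (intro exI[of _ "j+k"]) auto
    qed
  }
  {
    assume g: "GG m p xs k"
    show "goodw m (p+k) (drop k xs)" unfolding goodw_def
    proof (intro allI impI)
      fix t assume t: "1 \<le> t \<and> t + m - 1 \<le> length (drop k xs)"
      have "k + 1 \<le> t + k \<and> t + k + m - 1 \<le> length xs" using t k m by auto
      then obtain j where j: "t + k \<le> j \<and> j < t + k + m - 1 \<and> cutp p xs j"
        using g unfolding GG_def by blast
      have "cutp (p+k) (drop k xs) (j - k)"
        unfolding cutp_drop using j t by auto
      thus "\<exists>j. t \<le> j \<and> j < t + m - 1 \<and> cutp (p+k) (drop k xs) j" using j t
        by (intro exI[of _ "j-k"]) auto
    qed
  }
qed


definition phi :: "nat \<Rightarrow> nat \<Rightarrow> real" where "phi m j = (if m dvd j then 1 else 0)"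

lemma tele: "1 \<le> a \<Longrightarrow> a \<le> Suc L \<Longrightarrow> (\<Sum>k=a..L. phi m (k-1) - phi m k) = phi m (a-1) - phi m L"
proof (induction L)
  case 0 thus ?case by (cases a) auto
next
  case (Suc L)
  show ?case
  proof (cases "a = Suc (Suc L)")
    case True thus ?thesis by simp
  next
    case False
    hence "a \<le> Suc L" using Suc.prems by simp
    thus ?thesis using Suc.IH Suc.prems by simp
  qed
qed

lemma gg_window:
  assumes L: "L \<ge> 1" and m: "m > 0"
  shows "(\<Sum>k\<in>{1..L}. if L - k < m then gg m k else 0) = (if L < m then 1 else 0)"
proof -
  define a where "a = (if L < m then 1 else L - m + 1)"
  have "(\<Sum>k\<in>{1..L}. if L - k < m then gg m k else 0) = (\<Sum>k\<in>{k\<in>{1..L}. L - k < m}. gg m k)"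
    by (rule sum.inter_filter[symmetric]) simp
  also have "{k\<in>{1..L}. L - k < m} = {a..L}" unfolding a_def using L m by auto
  also have "(\<Sum>k\<in>{a..L}. gg m k) = (\<Sum>k=a..L. phi m (k-1) - phi m k)"
    by (simp add: gg_def phi_def)
  also have "\<dots> = phi m (a-1) - phi m L" using L m by (intro tele) (auto simp: a_def)
  also have "\<dots> = (if L < m then 1 else 0)"
  proof (cases "L < m")
    case True
    hence "\<not> m dvd L" using L by (auto dest: dvd_imp_le)
    thus ?thesis using True by (simp add: a_def phi_def)
  next
    case False
    thus ?thesis by (simp add: a_def phi_def dvd_minus_self)
  qed
  finally show ?thesis .
qed

lemma Wl_good: "m > 0 \<Longrightarrow> Wl m p xs = (if goodw m p xs then 1 else 0)"
proof (induction "length xs" arbitrary: xs p rule: less_induct)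
  case less
  note m = \<open>m > 0\<close>
  show ?case
  proof (cases "xs = []")
    case True
    have "goodw m p xs" unfolding goodw_def using True m by auto
    thus ?thesis using True by simp
  next
    case False
    define n where "n = length xs"
    have n1: "n \<ge> 1" using False by (simp add: n_def Suc_le_eq)
    define L where "L = (LEAST k. 1 \<le> k \<and> (k = n \<or> cutp p xs k))"
    have Lp: "1 \<le> L \<and> (L = n \<or> cutp p xs L)" unfolding L_def
      by (rule LeastI[of _ n]) (use n1 in auto)
    have Ln: "L \<le> n" unfolding L_def by (rule Least_le) (use n1 in auto)
    have Lmin: "\<not> cutp p xs j" if "1 \<le> j" "j < L" for j
      using not_less_Least[of j "\<lambda>k. 1 \<le> k \<and> (k = n \<or> cutp p xs k)"] that unfolding L_def[symmetric]
      by auto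
    have cutL: "L < n \<Longrightarrow> cutp p xs L" using Lp by auto
    have cutlt: "cutp p xs j \<Longrightarrow> j < n" for j by (simp add: cutp_def n_def)
    have cf: "cutfree p (take k xs) \<longleftrightarrow> k \<le> L" if "1 \<le> k" "k \<le> n" for k
    proof
      assume c: "cutfree p (take k xs)"
      show "k \<le> L"
      proof (rule ccontr)
        assume "\<not> k \<le> L"
        hence "L < n" "L < k" using that by auto
        hence "cutp p (take k xs) L" using cutL by (simp add: cutp_take)
        thus False using c by (simp add: cutfree_def)
      qed
    next
      assume "k \<le> L"
      thus "cutfree p (take k xs)" using Lmin by (auto simp: cutfree_def cutp_take cutp_def)
    qed
    have GGk: "GG m p xs k \<longleftrightarrow> (L - k < m \<and> (L < n \<longrightarrow> GG m p xs L))" if k: "k \<le> L" for k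
    proof
      assume g: "GG m p xs k"
      have "L - k < m"
      proof (rule ccontr)
        assume "\<not> L - k < m"
        hence "k + 1 \<le> k + 1 \<and> k + 1 + m - 1 \<le> length xs" using Ln k by (simp add: n_def)
        then obtain j where "k + 1 \<le> j" "j < k + 1 + m - 1" "cutp p xs j" using g unfolding GG_def by blast
        moreover have "j < L" using \<open>\<not> L - k < m\<close> \<open>j < k + 1 + m - 1\<close> k m by simp
        ultimately show False using Lmin by simp
      qed
      moreover have "GG m p xs L" using g k unfolding GG_def by auto
      ultimately show "L - k < m \<and> (L < n \<longrightarrow> GG m p xs L)" by simp
    next
      assume h: "L - k < m \<and> (L < n \<longrightarrow> GG m p xs L)"
      show "GG m p xs k" unfolding GG_def
      proof (intro allI impI)
        fix t assume t: "k + 1 \<le> t \<and> t + m - 1 \<le> length xs"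
        show "\<exists>j. t \<le> j \<and> j < t + m - 1 \<and> cutp p xs j"
        proof (cases "L + 1 \<le> t")
          case True
          hence "L < n" using t m unfolding n_def by arith
          thus ?thesis using h t True unfolding GG_def by blast
        next
          case False
          have "L < n"
          proof (rule ccontr)
            assume "\<not> L < n" hence "L = n" using Ln by simp
            thus False using t h False k unfolding n_def by arith
          qed
          thus ?thesis using cutL False h t k by (intro exI[of _ L]) auto
        qed
      qed
    qed
    have "Wl m p xs = (\<Sum>k\<in>{1..n}. if cutfree p (take k xs) then gg m k * Wl m (p+k) (drop k xs) else 0)"
      using False by (simp add: Wl_unfold n_def)
    also have "\<dots> = (\<Sum>k\<in>{1..n}. if k \<le> L then gg m k * (if GG m p xs k then 1 else 0) else 0)"
    proof (rule sum.cong[OF refl])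
      fix k assume k: "k \<in> {1..n}"
      have "Wl m (p+k) (drop k xs) = (if goodw m (p+k) (drop k xs) then 1 else 0)"
      proof -
        have "length (drop k xs) < length xs" using k unfolding n_def by simp arith
        thus ?thesis using less.hyps[of "drop k xs" "p+k"] m by blast
      qed
      also have "\<dots> = (if GG m p xs k then 1 else 0)" using k m by (simp add: goodw_drop n_def)
      finally show "(if cutfree p (take k xs) then gg m k * Wl m (p+k) (drop k xs) else 0) =
         (if k \<le> L then gg m k * (if GG m p xs k then 1 else 0) else 0)"
        using cf[of k] k by simp
    qed
    also have "\<dots> = (\<Sum>k\<in>{k\<in>{1..n}. k \<le> L}. gg m k * (if GG m p xs k then 1 else 0))"
      by (rule sum.inter_filter[symmetric]) simp
    also have "{k\<in>{1..n}. k \<le> L} = {1..L}" using Ln by auto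
    also have "(\<Sum>k\<in>{1..L}. gg m k * (if GG m p xs k then 1 else 0)) =
        (\<Sum>k\<in>{1..L}. (if L - k < m then gg m k else 0) * (if L < n \<longrightarrow> GG m p xs L then 1 else 0))"
      by (rule sum.cong[OF refl]) (use m in \<open>simp add: GGk\<close>)
    also have "\<dots> = (if L < m then 1 else 0) * (if L < n \<longrightarrow> GG m p xs L then 1 else 0)"
    proof -
      have w: "(\<Sum>k\<in>{1..L}. if L - k < m then gg m k else 0) = (if L < m then 1 else 0)"
        by (rule gg_window) (use Lp m in auto)
      show ?thesis by (simp only: sum_distrib_right[symmetric] w)
    qed
    also have "\<dots> = (if GG m p xs 0 then 1 else 0)" using GGk[of 0] by simp
    also have "\<dots> = (if goodw m p xs then 1 else 0)"
      using goodw_drop[of 0 xs m p] m by simp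
    finally show ?thesis .
  qed
qed


definition pset :: "nat set \<Rightarrow> nat list set" where "pset A = {xs. set xs = A \<and> distinct xs}"

lemma pset_finite [simp]: "finite A \<Longrightarrow> finite (pset A)"
proof -
  assume "finite A"
  hence "finite {xs. set xs \<subseteq> A \<and> length xs = card A}" by (rule finite_lists_length_eq)
  moreover have "pset A \<subseteq> {xs. set xs \<subseteq> A \<and> length xs = card A}"
    by (auto simp: pset_def distinct_card)
  ultimately show ?thesis by (rule rev_finite_subset)
qed

lemma pset_empty [simp]: "pset {} = {[]}"
  by (auto simp: pset_def)

lemma pset_single [simp]: "pset {x} = {[x]}"
proof -
  have "set xs = {x} \<and> distinct xs \<longleftrightarrow> xs = [x]" for xs
  proof
    assume h: "set xs = {x} \<and> distinct xs"
    hence "length xs = 1" using distinct_card[of xs] by simp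
    thus "xs = [x]" using h by (cases xs) auto
  qed auto
  thus ?thesis by (auto simp: pset_def)
qed

lemma pset_len: "xs \<in> pset A \<Longrightarrow> length xs = card A"
  by (auto simp: pset_def distinct_card)

lemma triple_sum:
  assumes "finite I" "\<And>L. L \<in> I \<Longrightarrow> finite (P L)" "\<And>L. L \<in> I \<Longrightarrow> finite (Q L)"
  shows "(\<Sum>L\<in>I. \<Sum>l\<in>P L. \<Sum>r\<in>Q L. g L l r) =
         (\<Sum>t\<in>(SIGMA L:I. P L \<times> Q L). g (fst t) (fst (snd t)) (snd (snd t)))"
proof -
  have "(\<Sum>L\<in>I. \<Sum>l\<in>P L. \<Sum>r\<in>Q L. g L l r) = (\<Sum>L\<in>I. \<Sum>lr\<in>P L \<times> Q L. g L (fst lr) (snd lr))"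
    by (rule sum.cong[OF refl]) (simp add: sum.cartesian_product split_beta)
  also have "\<dots> = (\<Sum>t\<in>(SIGMA L:I. P L \<times> Q L). g (fst t) (fst (snd t)) (snd (snd t)))"
    using assms by (subst sum.Sigma) (auto simp: split_beta)
  finally show ?thesis .
qed

lemma split_at_elem: "M \<in> set xs \<Longrightarrow> xs = takeWhile (\<lambda>x. x \<noteq> M) xs @ M # tl (dropWhile (\<lambda>x. x \<noteq> M) xs)"
proof -
  assume M: "M \<in> set xs"
  have ne: "dropWhile (\<lambda>x. x \<noteq> M) xs \<noteq> []" using M by (auto simp: dropWhile_eq_Nil_conv)
  hence "hd (dropWhile (\<lambda>x. x \<noteq> M) xs) = M" using hd_dropWhile[OF ne] by simp
  hence "dropWhile (\<lambda>x. x \<noteq> M) xs = M # tl (dropWhile (\<lambda>x. x \<noteq> M) xs)" using ne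
    by (metis list.collapse)
  thus ?thesis by (metis takeWhile_dropWhile_id)
qed

lemma takeWhile_split: "M \<notin> set l \<Longrightarrow> takeWhile (\<lambda>x. x \<noteq> M) (l @ M # r) = l"
  by (induction l) auto

lemma dropWhile_split: "M \<notin> set l \<Longrightarrow> dropWhile (\<lambda>x. x \<noteq> M) (l @ M # r) = M # r"
  by (induction l) auto

lemma split_max:
  assumes B: "finite B" and M: "M \<notin> B"
  shows "sum f (pset (insert M B)) = (\<Sum>L\<in>Pow B. \<Sum>l\<in>pset L. \<Sum>r\<in>pset (B - L). f (l @ M # r))"
proof -
  let ?S = "SIGMA L:Pow B. pset L \<times> pset (B - L)"
  have "(\<Sum>L\<in>Pow B. \<Sum>l\<in>pset L. \<Sum>r\<in>pset (B - L). f (l @ M # r)) =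
        (\<Sum>t\<in>?S. f (fst (snd t) @ M # snd (snd t)))"
  proof (rule triple_sum)
    show "finite (Pow B)" using B by simp
    fix L assume "L \<in> Pow B"
    hence "L \<subseteq> B" by simp
    hence fL: "finite L" using B by (rule finite_subset)
    show "finite (pset L)" using fL by (rule pset_finite)
    show "finite (pset (B - L))" using B by simp
  qed
  also have "\<dots> = sum f (pset (insert M B))"
  proof (rule sum.reindex_bij_witness[where j = "\<lambda>t. fst (snd t) @ M # snd (snd t)"
        and i = "\<lambda>xs. (set (takeWhile (\<lambda>x. x \<noteq> M) xs), takeWhile (\<lambda>x. x \<noteq> M) xs, tl (dropWhile (\<lambda>x. x \<noteq> M) xs))"])
    fix t assume t: "t \<in> ?S"
    then obtain L l r where tt: "t = (L, l, r)" and L: "L \<subseteq> B" and l: "l \<in> pset L" and r: "r \<in> pset (B - L)"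
      by auto
    have Ml: "M \<notin> set l" using l L M by (auto simp: pset_def)
    show "(set (takeWhile (\<lambda>x. x \<noteq> M) (fst (snd t) @ M # snd (snd t))),
          takeWhile (\<lambda>x. x \<noteq> M) (fst (snd t) @ M # snd (snd t)),
          tl (dropWhile (\<lambda>x. x \<noteq> M) (fst (snd t) @ M # snd (snd t)))) = t"
      using tt Ml l by (simp add: takeWhile_split dropWhile_split pset_def)
    show "fst (snd t) @ M # snd (snd t) \<in> pset (insert M B)"
      using tt l r L M by (auto simp: pset_def)
  next
    fix xs assume xs: "xs \<in> pset (insert M B)"
    hence Mx: "M \<in> set xs" by (simp add: pset_def)
    note sp = split_at_elem[OF Mx]
    show "fst (snd (set (takeWhile (\<lambda>x. x \<noteq> M) xs), takeWhile (\<lambda>x. x \<noteq> M) xs, tl (dropWhile (\<lambda>x. x \<noteq> M) xs))) @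
          M # snd (snd (set (takeWhile (\<lambda>x. x \<noteq> M) xs), takeWhile (\<lambda>x. x \<noteq> M) xs, tl (dropWhile (\<lambda>x. x \<noteq> M) xs))) = xs"
      using sp by simp
    define l where "l = takeWhile (\<lambda>x. x \<noteq> M) xs"
    define r where "r = tl (dropWhile (\<lambda>x. x \<noteq> M) xs)"
    have xs2: "xs = l @ M # r" using sp by (simp add: l_def r_def)
    have d: "distinct (l @ M # r)" and s: "set (l @ M # r) = insert M B" using xs xs2 by (auto simp: pset_def)
    have "set l \<subseteq> B" using d s by auto
    moreover have "l \<in> pset (set l)" using d by (simp add: pset_def)
    moreover have "r \<in> pset (B - set l)" using d s M by (auto simp: pset_def)
    ultimately show "(set (takeWhile (\<lambda>x. x \<noteq> M) xs), takeWhile (\<lambda>x. x \<noteq> M) xs, tl (dropWhile (\<lambda>x. x \<noteq> M) xs)) \<in> ?S"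
      by (simp add: l_def r_def)
  qed simp
  finally show ?thesis ..
qed

lemma split_prefix:
  assumes A: "finite A" and k: "k \<le> card A"
  shows "sum f (pset A) = (\<Sum>C\<in>{C. C \<subseteq> A \<and> card C = k}. \<Sum>ys\<in>pset C. \<Sum>zs\<in>pset (A - C). f (ys @ zs))"
proof -
  let ?S = "SIGMA C:{C. C \<subseteq> A \<and> card C = k}. pset C \<times> pset (A - C)"
  have "(\<Sum>C\<in>{C. C \<subseteq> A \<and> card C = k}. \<Sum>ys\<in>pset C. \<Sum>zs\<in>pset (A - C). f (ys @ zs)) =
        (\<Sum>t\<in>?S. f (fst (snd t) @ snd (snd t)))"
  proof (rule triple_sum)
    have "{C. C \<subseteq> A \<and> card C = k} \<subseteq> Pow A" by auto
    thus "finite {C. C \<subseteq> A \<and> card C = k}" using A by (rule finite_subset[OF _ finite_Pow_iff[THEN iffD2]])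
    fix L assume "L \<in> {C. C \<subseteq> A \<and> card C = k}"
    hence "L \<subseteq> A" by simp
    hence fL: "finite L" using A by (rule finite_subset)
    show "finite (pset L)" using fL by (rule pset_finite)
    show "finite (pset (A - L))" using A by simp
  qed
  also have "\<dots> = sum f (pset A)"
  proof (rule sum.reindex_bij_witness[where j = "\<lambda>t. fst (snd t) @ snd (snd t)"
        and i = "\<lambda>xs. (set (take k xs), take k xs, drop k xs)"])
    fix t assume t: "t \<in> ?S"
    then obtain C ys zs where tt: "t = (C, ys, zs)" and C: "C \<subseteq> A" "card C = k" and ys: "ys \<in> pset C" and zs: "zs \<in> pset (A - C)"
      by auto
    have "length ys = k" using ys C pset_len by blast
    thus "(set (take k (fst (snd t) @ snd (snd t))), take k (fst (snd t) @ snd (snd t)), drop k (fst (snd t) @ snd (snd t))) = t"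
      using tt ys by (simp add: pset_def)
    show "fst (snd t) @ snd (snd t) \<in> pset A"
      using tt ys zs C by (auto simp: pset_def)
  next
    fix xs assume xs: "xs \<in> pset A"
    show "fst (snd (set (take k xs), take k xs, drop k xs)) @ snd (snd (set (take k xs), take k xs, drop k xs)) = xs"
      by simp
    have d: "distinct xs" and s: "set xs = A" using xs by (auto simp: pset_def)
    have len: "length xs = card A" using xs by (rule pset_len)
    have "set (take k xs) \<subseteq> A" using s by (auto dest: in_set_takeD)
    moreover have "card (set (take k xs)) = k" using d len k by (simp add: distinct_card)
    moreover have "take k xs \<in> pset (set (take k xs))" using d by (simp add: pset_def)
    moreover have "drop k xs \<in> pset (A - set (take k xs))"
    proof -
      have "set (drop k xs) = A - set (take k xs)"
      proof -
        have u: "set xs = set (take k xs) \<union> set (drop k xs)" by (metis append_take_drop_id set_append)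
        have dj: "set (take k xs) \<inter> set (drop k xs) = {}"
          using set_take_disj_set_drop_if_distinct[OF d, of k k] by simp
        show ?thesis using s u dj by blast
      qed
      thus ?thesis using d by (simp add: pset_def)
    qed
    ultimately show "(set (take k xs), take k xs, drop k xs) \<in> ?S" by simp
  qed simp
  finally show ?thesis ..
qed


lemma cutp_split_left: "i < length l \<Longrightarrow> cutp p (l @ M # r) i \<longleftrightarrow> cutp p l i"
  by (auto simp: cutp_def nth_append)

lemma cutp_split_mid1:
  assumes "l \<noteq> []" "\<forall>x\<in>set l. x < M"
  shows "cutp p (l @ M # r) (length l) \<longleftrightarrow> even (length l + p)"
proof -
  have "(l @ M # r) ! (length l - 1) = l ! (length l - 1)" using assms(1) by (simp add: nth_append)
  moreover have "l ! (length l - 1) < M" using assms by (simp add: last_conv_nth[symmetric])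
  ultimately show ?thesis using assms(1) by (auto simp: cutp_def nth_append Suc_le_eq)
qed

lemma cutp_split_mid2:
  assumes "r \<noteq> []" "\<forall>x\<in>set r. x < M"
  shows "cutp p (l @ M # r) (Suc (length l)) \<longleftrightarrow> odd (Suc (length l) + p)"
proof -
  have "(l @ M # r) ! (Suc (length l)) = r ! 0" by (simp add: nth_append)
  moreover have "r ! 0 < M" using assms by simp
  ultimately show ?thesis using assms(1) by (auto simp: cutp_def nth_append)
qed

lemma cutp_split_right:
  assumes "j \<ge> 1"
  shows "cutp p (l @ M # r) (Suc (length l) + j) \<longleftrightarrow> cutp (p + length l + 1) r j"
proof -
  have a: "(l @ M # r) ! (Suc (length l) + j - 1) = r ! (j - 1)"
    using assms by (simp add: nth_append)
  have b: "(l @ M # r) ! (Suc (length l) + j) = r ! j"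
    by (simp add: nth_append)
  have c: "even (Suc (length l) + j + p) \<longleftrightarrow> even (j + (p + length l + 1))" by (simp add: algebra_simps)
  show ?thesis unfolding cutp_def a b using assms c by auto
qed

lemma cutfree_split:
  assumes l: "\<forall>x\<in>set l. x < M" and r: "\<forall>x\<in>set r. x < M" and ne: "l \<noteq> [] \<or> r \<noteq> []"
  shows "cutfree p (l @ M # r) \<longleftrightarrow> even (length l + 1 + p) \<and> cutfree p l \<and> cutfree (p + length l + 1) r"
proof
  assume c: "cutfree p (l @ M # r)"
  have "even (length l + 1 + p)"
  proof (cases "l = []")
    case True
    hence "r \<noteq> []" using ne by simp
    thus ?thesis using c cutp_split_mid2[OF _ r, of p l] by (simp add: cutfree_def)
  next
    case False
    thus ?thesis using c cutp_split_mid1[OF _ l, of p r] by (simp add: cutfree_def)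
  qed
  moreover have "cutfree p l"
    unfolding cutfree_def
  proof
    fix i show "\<not> cutp p l i"
    proof
      assume h: "cutp p l i"
      hence "i < length l" by (simp add: cutp_def)
      thus False using h c cutp_split_left[of i l p M r] by (simp add: cutfree_def)
    qed
  qed
  moreover have "cutfree (p + length l + 1) r"
    unfolding cutfree_def
  proof
    fix j show "\<not> cutp (p + length l + 1) r j"
    proof
      assume h: "cutp (p + length l + 1) r j"
      hence "j \<ge> 1" by (simp add: cutp_def)
      thus False using h c cutp_split_right[of j p l M r] by (simp add: cutfree_def)
    qed
  qed
  ultimately show "even (length l + 1 + p) \<and> cutfree p l \<and> cutfree (p + length l + 1) r" by simp
next
  assume h: "even (length l + 1 + p) \<and> cutfree p l \<and> cutfree (p + length l + 1) r"
  show "cutfree p (l @ M # r)" unfolding cutfree_def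
  proof
    fix i show "\<not> cutp p (l @ M # r) i"
    proof (cases "i < length l")
      case True thus ?thesis using h cutp_split_left[of i l p M r] by (simp add: cutfree_def)
    next
      case False
      show ?thesis
      proof (cases "i = length l")
        case True
        show ?thesis
        proof (cases "l = []")
          case True thus ?thesis using \<open>i = length l\<close> by (simp add: cutp_def)
        next
          case False thus ?thesis using \<open>i = length l\<close> h cutp_split_mid1[OF _ l, of p r] by simp
        qed
      next
        case False2: False
        show ?thesis
        proof (cases "i = Suc (length l)")
          case True
          show ?thesis
          proof (cases "r = []")
            case True thus ?thesis using \<open>i = Suc (length l)\<close> by (simp add: cutp_def)
          next
            case False thus ?thesis using \<open>i = Suc (length l)\<close> h cutp_split_mid2[OF _ r, of p l] by simp
          qed
        next
          case False3: False
          define j where "j = i - Suc (length l)"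
          have ij: "i = Suc (length l) + j" "j \<ge> 1" using False False2 False3 by (auto simp: j_def)
          thus ?thesis using h cutp_split_right[of j p l M r] by (simp add: cutfree_def)
        qed
      qed
    qed
  qed
qed

definition altc :: "nat \<Rightarrow> nat set \<Rightarrow> real" where
  "altc p C = (\<Sum>ys\<in>pset C. if cutfree p ys then 1 else 0)"

lemma sum_by_card:
  assumes "finite B"
  shows "(\<Sum>L\<in>Pow B. h (card L)) = (\<Sum>i=0..card B. real (card B choose i) * h i)"
proof -
  have "(\<Sum>L\<in>Pow B. h (card L)) = (\<Sum>i\<in>{0..card B}. \<Sum>L\<in>{L\<in>Pow B. card L = i}. h (card L))"
    using assms by (intro sum.group[symmetric]) (auto intro: card_mono)
  also have "\<dots> = (\<Sum>i=0..card B. real (card B choose i) * h i)"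
  proof (rule sum.cong[OF refl])
    fix i
    have "{L\<in>Pow B. card L = i} = {L. L \<subseteq> B \<and> card L = i}" by auto
    hence "card {L\<in>Pow B. card L = i} = card B choose i" using n_subsets[OF assms] by simp
    moreover have "(\<Sum>L\<in>{L\<in>Pow B. card L = i}. h (card L)) = (\<Sum>L\<in>{L\<in>Pow B. card L = i}. h i)"
      by (rule sum.cong) auto
    ultimately show "(\<Sum>L\<in>{L\<in>Pow B. card L = i}. h (card L)) = real (card B choose i) * h i"
      by simp
  qed
  finally show ?thesis .
qed

lemma E_parity:
  assumes "n \<ge> 1"
  shows "(\<Sum>i=0..n. real (n choose i) * ((if even (i+1+p) then 1 else 0) * euler_num i * euler_num (n-i))) = euler_num (Suc n)"
proof -
  let ?c = "\<lambda>i. real (n choose i) * euler_num i * euler_num (n-i)"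
  have pt: "real (n choose i) * ((if even (i+1+p) then 1 else 0) * euler_num i * euler_num (n-i)) =
        (?c i - (-1)^p * ((-1)^i * ?c i)) / 2" for i
  proof -
    have "(-1::real)^p * (-1)^i = (-1)^(i+p)" by (simp add: power_add)
    moreover have "(-1::real)^(i+p) = (if even (i+p) then 1 else -1)" by simp
    ultimately show ?thesis by (auto simp: algebra_simps)
  qed
  have "(\<Sum>i=0..n. real (n choose i) * ((if even (i+1+p) then 1 else 0) * euler_num i * euler_num (n-i))) =
      ((\<Sum>i=0..n. ?c i) - (-1)^p * (\<Sum>i=0..n. (-1)^i * ?c i)) / 2"
    by (simp only: pt sum_divide_distrib[symmetric] sum_subtractf sum_distrib_left)
  also have "\<dots> = euler_num (Suc n)" using E_rec[OF assms] E_alt[OF assms] by simp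
  finally show ?thesis .
qed

lemma altc_euler: "finite C \<Longrightarrow> altc p C = euler_num (card C)"
proof (induction "card C" arbitrary: C p rule: less_induct)
  case less
  show ?case
  proof (cases "card C \<le> 1")
    case True
    show ?thesis
    proof (cases "card C = 0")
      case True
      hence "C = {}" using less.prems by simp
      thus ?thesis by (simp add: altc_def E0 cutfree_def cutp_def)
    next
      case False
      hence "card C = 1" using True by simp
      then obtain x where "C = {x}" by (auto simp: card_Suc_eq)
      thus ?thesis using E1 by (simp add: altc_def cutfree_def cutp_def)
    qed
  next
    case False
    define M where "M = Max C"
    define B where "B = C - {M}"
    have ne: "C \<noteq> {}" using False by auto
    have MC: "M \<in> C" unfolding M_def using less.prems ne by simp
    have CB: "C = insert M B" using MC by (auto simp: B_def)
    have MB: "M \<notin> B" by (simp add: B_def)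
    have fB: "finite B" using less.prems by (simp add: B_def)
    have cB: "card C = Suc (card B)" using CB MB fB by simp
    define n where "n = card B"
    have n1: "n \<ge> 1" using False cB by (simp add: n_def)
    have ltM: "x < M" if "x \<in> B" for x
    proof -
      have "x \<le> M" using that less.prems by (auto simp: M_def B_def)
      moreover have "x \<noteq> M" using that MB by auto
      ultimately show ?thesis by simp
    qed
    have "altc p C = (\<Sum>L\<in>Pow B. \<Sum>l\<in>pset L. \<Sum>r\<in>pset (B - L). if cutfree p (l @ M # r) then 1 else 0)"
      unfolding altc_def CB by (rule split_max[OF fB MB])
    also have "\<dots> = (\<Sum>L\<in>Pow B. (if even (card L + 1 + p) then 1 else 0) * (altc p L * altc (p + card L + 1) (B - L)))"
    proof (rule sum.cong[OF refl])
      fix L assume L: "L \<in> Pow B"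
      have fL: "finite L" using L fB by (simp add: finite_subset)
      have cBL: "card (B - L) = n - card L" using L fB fL by (simp add: card_Diff_subset n_def)
      have cL: "card L \<le> n" using L fB by (simp add: card_mono n_def)
      have inner: "(if cutfree p (l @ M # r) then 1 else 0) =
          (if even (card L + 1 + p) then 1 else 0) * ((if cutfree p l then 1 else 0) * (if cutfree (p + card L + 1) r then 1 else (0::real)))"
        if l: "l \<in> pset L" and r: "r \<in> pset (B - L)" for l r
      proof -
        have ll: "length l = card L" using l by (rule pset_len)
        have lr: "length r = n - card L" using r cBL by (simp add: pset_len)
        have "\<forall>x\<in>set l. x < M" using l L ltM by (auto simp: pset_def)
        moreover have "\<forall>x\<in>set r. x < M" using r ltM by (auto simp: pset_def)
        moreover have "l \<noteq> [] \<or> r \<noteq> []" using ll lr n1 cL by auto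
        ultimately have "cutfree p (l @ M # r) \<longleftrightarrow> even (card L + 1 + p) \<and> cutfree p l \<and> cutfree (p + card L + 1) r"
          using cutfree_split ll by metis
        thus ?thesis by simp
      qed
      have "(\<Sum>l\<in>pset L. \<Sum>r\<in>pset (B - L). if cutfree p (l @ M # r) then 1 else 0) =
          (\<Sum>l\<in>pset L. \<Sum>r\<in>pset (B - L). (if even (card L + 1 + p) then 1 else 0) * ((if cutfree p l then 1 else 0) * (if cutfree (p + card L + 1) r then 1 else (0::real))))"
        by (intro sum.cong refl inner)
      also have "\<dots> = (if even (card L + 1 + p) then 1 else 0) * (\<Sum>l\<in>pset L. \<Sum>r\<in>pset (B - L). (if cutfree p l then 1 else 0) * (if cutfree (p + card L + 1) r then 1 else (0::real)))"
        by (simp only: sum_distrib_left)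
      also have "\<dots> = (if even (card L + 1 + p) then 1 else 0) * (altc p L * altc (p + card L + 1) (B - L))"
        unfolding altc_def by (simp only: sum_product)
      finally show "(\<Sum>l\<in>pset L. \<Sum>r\<in>pset (B - L). if cutfree p (l @ M # r) then 1 else 0) =
          (if even (card L + 1 + p) then 1 else 0) * (altc p L * altc (p + card L + 1) (B - L))" .
    qed
    also have "\<dots> = (\<Sum>L\<in>Pow B. (if even (card L + 1 + p) then 1 else 0) * euler_num (card L) * euler_num (n - card L))"
    proof (rule sum.cong[OF refl])
      fix L assume L: "L \<in> Pow B"
      have fL: "finite L" using L fB by (simp add: finite_subset)
      have cBL: "card (B - L) = n - card L" using L fB fL by (simp add: card_Diff_subset n_def)
      have cL: "card L < card C" using L fB cB by (simp add: card_mono le_imp_less_Suc)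
      have cL2: "card (B - L) < card C" using cB fB by (simp add: card_mono le_imp_less_Suc)
      show "(if even (card L + 1 + p) then 1 else 0) * (altc p L * altc (p + card L + 1) (B - L)) =
          (if even (card L + 1 + p) then 1 else 0) * euler_num (card L) * euler_num (n - card L)"
      proof -
        have "altc (p + card L + 1) (B - L) = euler_num (card (B - L))"
          using less.hyps[OF cL2] fB by simp
        moreover have "altc p L = euler_num (card L)" using less.hyps[OF cL fL] by simp
        ultimately show ?thesis using cBL by simp
      qed
    qed
    also have "\<dots> = (\<Sum>i=0..n. real (n choose i) * ((if even (i+1+p) then 1 else 0) * euler_num i * euler_num (n-i)))"
      unfolding n_def using sum_by_card[OF fB, of "\<lambda>i. (if even (i+1+p) then 1 else 0) * euler_num i * euler_num (card B - i)"]
      by simp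
    also have "\<dots> = euler_num (Suc n)" by (rule E_parity[OF n1])
    also have "Suc n = card C" using cB by (simp add: n_def)
    finally show ?thesis .
  qed
qed



definition DD :: "nat \<Rightarrow> real fps" where
  "DD m = Abs_fps (\<lambda>k.
      (if m dvd k then euler_num k / fact k else 0)
      - (if k \<ge> 1 \<and> m dvd (k - 1) then euler_num k / fact k else 0))"

lemma DD0: "DD m $ 0 = 1"
  by (simp add: DD_def E0)

lemma DDk: "k \<ge> 1 \<Longrightarrow> DD m $ k = - (gg m k * (euler_num k / fact k))"
  by (simp add: DD_def gg_def)

lemma IV_rec:
  assumes n: "n \<ge> 1"
  shows "inverse (DD m) $ n = (\<Sum>k=1..n. gg m k * (euler_num k / fact k) * inverse (DD m) $ (n-k))"
proof -
  have "DD m * inverse (DD m) = 1" by (rule inverse_mult_eq_1') (simp add: DD0)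
  hence "(DD m * inverse (DD m)) $ n = 0" using n by simp
  hence "(\<Sum>k=0..n. DD m $ k * inverse (DD m) $ (n-k)) = 0" by (simp add: fps_mult_nth)
  hence "DD m $ 0 * inverse (DD m) $ (n-0) + (\<Sum>k=Suc 0..n. DD m $ k * inverse (DD m) $ (n-k)) = 0"
    by (simp add: sum.atLeast_Suc_atMost)
  hence "inverse (DD m) $ n + (\<Sum>k=1..n. - (gg m k * (euler_num k / fact k) * inverse (DD m) $ (n-k))) = 0"
    by (simp add: DD0 DDk)
  thus ?thesis by (simp add: sum_negf)
qed

lemma Wsum: "finite A \<Longrightarrow> (\<Sum>xs\<in>pset A. Wl m p xs) = fact (card A) * inverse (DD m) $ card A"
proof (induction "card A" arbitrary: A p rule: less_induct)
  case less
  define n where "n = card A"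
  show ?case
  proof (cases "n = 0")
    case True
    hence "A = {}" using less.prems by (simp add: n_def)
    thus ?thesis by (simp add: DD0)
  next
    case False
    hence n1: "n \<ge> 1" by simp
    have "(\<Sum>xs\<in>pset A. Wl m p xs) = (\<Sum>xs\<in>pset A. \<Sum>k\<in>{1..n}. if cutfree p (take k xs) then gg m k * Wl m (p+k) (drop k xs) else 0)"
    proof (rule sum.cong[OF refl])
      fix xs assume xs: "xs \<in> pset A"
      hence "length xs = n" by (simp add: pset_len n_def)
      thus "Wl m p xs = (\<Sum>k\<in>{1..n}. if cutfree p (take k xs) then gg m k * Wl m (p+k) (drop k xs) else 0)"
      proof -
        have ne: "xs \<noteq> []" using \<open>length xs = n\<close> n1 by auto
        show ?thesis using Wl_unfold[OF ne, of m p] \<open>length xs = n\<close> by simp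
      qed
    qed
    also have "\<dots> = (\<Sum>k\<in>{1..n}. \<Sum>xs\<in>pset A. if cutfree p (take k xs) then gg m k * Wl m (p+k) (drop k xs) else 0)"
      by (rule sum.swap)
    also have "\<dots> = (\<Sum>k\<in>{1..n}. real (n choose k) * (euler_num k * (gg m k * (fact (n-k) * inverse (DD m) $ (n-k)))))"
    proof (rule sum.cong[OF refl])
      fix k assume k: "k \<in> {1..n}"
      have "(\<Sum>xs\<in>pset A. if cutfree p (take k xs) then gg m k * Wl m (p+k) (drop k xs) else 0) =
          (\<Sum>C\<in>{C. C \<subseteq> A \<and> card C = k}. \<Sum>ys\<in>pset C. \<Sum>zs\<in>pset (A - C).
              if cutfree p (take k (ys @ zs)) then gg m k * Wl m (p+k) (drop k (ys @ zs)) else 0)"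
        using less.prems k by (intro split_prefix) (auto simp: n_def)
      also have "\<dots> = (\<Sum>C\<in>{C. C \<subseteq> A \<and> card C = k}. euler_num k * (gg m k * (fact (n-k) * inverse (DD m) $ (n-k))))"
      proof (rule sum.cong[OF refl])
        fix C assume C: "C \<in> {C. C \<subseteq> A \<and> card C = k}"
        have "C \<subseteq> A" using C by simp
        hence fC: "finite C" using less.prems by (rule finite_subset)
        have cAC: "card (A - C) = n - k" using C less.prems fC by (simp add: card_Diff_subset n_def)
        have lt: "card (A - C) < card A" using cAC k by (simp add: n_def)
        have IH: "(\<Sum>zs\<in>pset (A - C). Wl m (p+k) zs) = fact (n-k) * inverse (DD m) $ (n-k)"
          using less.hyps[OF lt] less.prems cAC by simp
        have "(\<Sum>ys\<in>pset C. \<Sum>zs\<in>pset (A - C).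
              if cutfree p (take k (ys @ zs)) then gg m k * Wl m (p+k) (drop k (ys @ zs)) else 0) =
            (\<Sum>ys\<in>pset C. \<Sum>zs\<in>pset (A - C). (if cutfree p ys then 1 else 0) * (gg m k * Wl m (p+k) zs))"
        proof (intro sum.cong refl)
          fix ys zs assume ys: "ys \<in> pset C"
          hence "length ys = k" using C pset_len by auto
          thus "(if cutfree p (take k (ys @ zs)) then gg m k * Wl m (p+k) (drop k (ys @ zs)) else 0) =
              (if cutfree p ys then 1 else 0) * (gg m k * Wl m (p+k) zs)" by simp
        qed
        also have "\<dots> = altc p C * (\<Sum>zs\<in>pset (A - C). gg m k * Wl m (p+k) zs)"
          unfolding altc_def by (rule sum_product[symmetric])
        also have "\<dots> = altc p C * (gg m k * (\<Sum>zs\<in>pset (A - C). Wl m (p+k) zs))"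
          by (simp only: sum_distrib_left)
        also have "\<dots> = euler_num k * (gg m k * (fact (n-k) * inverse (DD m) $ (n-k)))"
          using altc_euler[OF fC, of p] C IH by simp
        finally show "(\<Sum>ys\<in>pset C. \<Sum>zs\<in>pset (A - C).
              if cutfree p (take k (ys @ zs)) then gg m k * Wl m (p+k) (drop k (ys @ zs)) else 0) =
            euler_num k * (gg m k * (fact (n-k) * inverse (DD m) $ (n-k)))" .
      qed
      also have "\<dots> = real (n choose k) * (euler_num k * (gg m k * (fact (n-k) * inverse (DD m) $ (n-k))))"
        using n_subsets[OF less.prems, of k] by (simp add: n_def)
      finally show "(\<Sum>xs\<in>pset A. if cutfree p (take k xs) then gg m k * Wl m (p+k) (drop k xs) else 0) =
          real (n choose k) * (euler_num k * (gg m k * (fact (n-k) * inverse (DD m) $ (n-k))))" .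
    qed
    also have "\<dots> = (\<Sum>k=1..n. fact n * (gg m k * (euler_num k / fact k) * inverse (DD m) $ (n-k)))"
    proof (rule sum.cong[OF refl])
      fix k assume k: "k \<in> {1..n}"
      have f: "fact k * fact (n-k) * real (n choose k) = (fact n :: real)" using k by (intro choose_fact_real) simp
      have "fact n * (gg m k * (euler_num k / fact k) * inverse (DD m) $ (n-k)) =
          (fact k * fact (n-k) * real (n choose k)) * (gg m k * (euler_num k / fact k) * inverse (DD m) $ (n-k))"
        by (simp only: f)
      also have "\<dots> = real (n choose k) * (euler_num k * (gg m k * (fact (n-k) * inverse (DD m) $ (n-k))))"
        by (simp add: field_simps)
      finally show "real (n choose k) * (euler_num k * (gg m k * (fact (n-k) * inverse (DD m) $ (n-k)))) =
          fact n * (gg m k * (euler_num k / fact k) * inverse (DD m) $ (n-k))" by simp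
    qed
    also have "\<dots> = fact n * inverse (DD m) $ n"
      by (simp add: IV_rec[OF n1] sum_distrib_left)
    finally show ?thesis by (simp add: n_def)
  qed
qed

lemma alt_desc_cutp: "alt_desc xs i \<longleftrightarrow> cutp 0 xs i"
  by (simp add: alt_desc_def cutp_def)

lemma dfb_sub: "desc_free_block xs a b \<Longrightarrow> a \<le> a' \<Longrightarrow> a' \<le> b' \<Longrightarrow> b' \<le> b \<Longrightarrow> desc_free_block xs a' b'"
  by (auto simp: desc_free_block_def)

lemma runs_iff:
  assumes m: "m > 0"
  shows "(\<forall>a b. alt_run xs a b \<longrightarrow> b - a + 1 < m) \<longleftrightarrow> goodw m 0 xs"
proof
  assume g: "goodw m 0 xs"
  show "\<forall>a b. alt_run xs a b \<longrightarrow> b - a + 1 < m"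
  proof (intro allI impI)
    fix a b assume r: "alt_run xs a b"
    hence d: "desc_free_block xs a b" by (simp add: alt_run_def)
    show "b - a + 1 < m"
    proof (rule ccontr)
      assume "\<not> b - a + 1 < m"
      hence "1 \<le> a \<and> a + m - 1 \<le> length xs" "a + m - 1 \<le> b" using d m by (auto simp: desc_free_block_def)
      then obtain j where "a \<le> j" "j < a + m - 1" "cutp 0 xs j" using g unfolding goodw_def by blast
      thus False using d \<open>a + m - 1 \<le> b\<close> by (auto simp: desc_free_block_def alt_desc_cutp)
    qed
  qed
next
  assume R: "\<forall>a b. alt_run xs a b \<longrightarrow> b - a + 1 < m"
  show "goodw m 0 xs" unfolding goodw_def
  proof (intro allI impI)
    fix t assume t: "1 \<le> t \<and> t + m - 1 \<le> length xs"
    show "\<exists>j. t \<le> j \<and> j < t + m - 1 \<and> cutp 0 xs j"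
    proof (rule ccontr)
      assume nj: "\<not> (\<exists>j. t \<le> j \<and> j < t + m - 1 \<and> cutp 0 xs j)"
      define b0 where "b0 = t + m - 1"
      have D: "desc_free_block xs t b0" using t nj m by (auto simp: desc_free_block_def b0_def alt_desc_cutp)
      define a' where "a' = (LEAST a. desc_free_block xs a b0)"
      have a'1: "desc_free_block xs a' b0" unfolding a'_def using D by (rule LeastI)
      have a'2: "a' \<le> t" unfolding a'_def using D by (rule Least_le)
      define b' where "b' = (GREATEST b. desc_free_block xs a' b)"
      have bnd: "\<And>y. desc_free_block xs a' y \<Longrightarrow> y \<le> length xs" by (simp add: desc_free_block_def)
      have b'1: "desc_free_block xs a' b'" unfolding b'_def using a'1 bnd by (rule GreatestI_nat)
      have b'2: "b0 \<le> b'" unfolding b'_def using a'1 bnd by (rule Greatest_le_nat)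
      have "alt_run xs a' b'" unfolding alt_run_def
      proof (rule conjI[OF b'1], intro allI impI)
        fix a'' b'' assume h: "desc_free_block xs a'' b'' \<and> a'' \<le> a' \<and> b' \<le> b''"
        have "desc_free_block xs a'' b0" using h a'1 b'2
          by (auto simp: desc_free_block_def)
        hence "a' \<le> a''" unfolding a'_def by (rule Least_le)
        hence "a'' = a'" using h by simp
        moreover have "b'' \<le> b'" unfolding b'_def using h \<open>a'' = a'\<close> bnd by (intro Greatest_le_nat) auto
        ultimately show "a'' = a' \<and> b'' = b'" using h by simp
      qed
      hence "b' - a' + 1 < m" using R by blast
      moreover have "b0 - t + 1 = m" using m t by (simp add: b0_def)
      ultimately show False using a'2 b'2 by linarith
    qed
  qed
qed

theorem mainTheorem12:
  fixes m :: nat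
  assumes "m > 0"
  shows "Abs_fps (\<lambda>n. real (a_count m n) / fact n) =
    inverse (Abs_fps (\<lambda>k.
      (if m dvd k then euler_num k / fact k else 0)
      - (if k \<ge> 1 \<and> m dvd (k - 1) then euler_num k / fact k else 0)))"
proof -
  have cnt: "real (a_count m n) = fact n * inverse (DD m) $ n" for n
  proof -
    have "{xs. distinct xs \<and> set xs = {1..n} \<and> (\<forall>a b. alt_run xs a b \<longrightarrow> b - a + 1 < m)} =
        {xs \<in> pset {1..n}. goodw m 0 xs}"
      using runs_iff[OF assms] by (auto simp: pset_def)
    hence "real (a_count m n) = real (card {xs \<in> pset {1..n}. goodw m 0 xs})" by (simp add: a_count_def)
    also have "\<dots> = (\<Sum>xs\<in>{xs \<in> pset {1..n}. goodw m 0 xs}. 1)" by simp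
    also have "\<dots> = (\<Sum>xs\<in>pset {1..n}. if goodw m 0 xs then 1 else 0)"
      by (rule sum.inter_filter) simp
    also have "\<dots> = (\<Sum>xs\<in>pset {1..n}. Wl m 0 xs)" using Wl_good[OF assms] by simp
    also have "\<dots> = fact n * inverse (DD m) $ n" using Wsum[of "{1..n}" m 0] by simp
    finally show ?thesis .
  qed
  have "Abs_fps (\<lambda>n. real (a_count m n) / fact n) = inverse (DD m)"
    by (rule fps_ext) (simp add: cnt)
  thus ?thesis by (simp add: DD_def)
qed


end
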